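(* Let $W\in C^2_{\mathrm{loc}}(\mathbb{R}^N)$ and let $a^\pm$ be local minima of $W$ with $W(a^-)<0=W(a^+)$. Assume $(U,c)\in[C^2(\mathbb{R})]^N\times(0,\infty)$ solves $U_{xx}-\nabla W(U)=-cU_x$ on $\mathbb{R}$ with $U(\pm\infty)=a^\pm$, and that $U_x(\pm\infty)=0$ up to sequences. Then \[ W^-(a^-)=c\int_{\mathbb{R}}|U_x|^2dx \qquad\text{and}\qquad c\,(a^+-a^-)=\int_{\mathbb{R}}\nabla W(U)\,dx . \]
   Context: $W^-:=\max\{-W,0\}$. *)

theory Defs
  imports "HOL-Analysis.Analysis"
begin

definition negpart :: "real \<Rightarrow> real" where
  "negpart t = max (- t) 0"

definition is_local_min :: "('a::metric_space \<Rightarrow> real) \<Rightarrow> 'a \<Rightarrow> bool" where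
  "is_local_min f a \<longleftrightarrow> (\<exists>e>0. \<forall>y. dist y a < e \<longrightarrow> f a \<le> f y)"

end

theory Submission
  imports Defs
begin

lemma improper_ftc:
  fixes F f :: "real \<Rightarrow> 'a::banach"
  assumes d: "\<And>x. (F has_vector_derivative f x) (at x)"
    and t: "(F \<longlongrightarrow> L2) at_top" and b: "(F \<longlongrightarrow> L1) at_bot"
  shows "(f has_integral (L2 - L1)) UNIV"
proof -
  have int: "(f has_integral (F y - F x)) {x..y}" if "x \<le> y" for x y
    by (rule fundamental_theorem_of_calculus) (auto intro: has_vector_derivative_at_within d that)
  have I: "f integrable_on cbox x y" for x y
  proof (cases "x \<le> y")
    case True then show ?thesis using int by auto
  next
    case False then have "cbox x y = {}" by auto
    then show ?thesis by (simp add: integrable_on_empty)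
  qed
  have L: "\<exists>B>0. \<forall>x y. ball 0 B \<subseteq> cbox x y \<longrightarrow> norm (integral (cbox x y) f - (L2 - L1)) < e"
    if e: "e > 0" for e
  proof -
    have "\<forall>\<^sub>F x in at_top. dist (F x) L2 < e/2" using t e tendsto_iff[THEN iffD1, OF t, rule_format, of "e/2"] by simp
    then obtain N2 where N2: "\<And>x. x \<ge> N2 \<Longrightarrow> dist (F x) L2 < e/2"
      by (auto simp: eventually_at_top_linorder)
    have "\<forall>\<^sub>F x in at_bot. dist (F x) L1 < e/2" using b e tendsto_iff[THEN iffD1, OF b, rule_format, of "e/2"] by simp
    then obtain N1 where N1: "\<And>x. x \<le> N1 \<Longrightarrow> dist (F x) L1 < e/2"
      by (auto simp: eventually_at_bot_linorder)
    define B where "B = \<bar>N1\<bar> + \<bar>N2\<bar> + 1"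
    show ?thesis
    proof (intro exI[of _ B] conjI allI impI)
      show "B > 0" unfolding B_def by simp
      fix x y assume sub: "ball 0 B \<subseteq> cbox x (y::real)"
      have m: "- \<bar>N1\<bar> \<in> ball 0 B" "\<bar>N2\<bar> \<in> ball 0 B" unfolding B_def by auto
      have xy: "x \<le> - \<bar>N1\<bar>" "\<bar>N2\<bar> \<le> y"
        using subsetD[OF sub m(1)] subsetD[OF sub m(2)] by simp_all
      then have "x \<le> y" by linarith
      then have "integral (cbox x y) f = F y - F x" using int by (simp add: integral_unique)
      then have eq: "integral (cbox x y) f - (L2 - L1) = (F y - L2) - (F x - L1)" by simp
      have "dist (F y) L2 < e/2" "dist (F x) L1 < e/2" using xy N1 N2 by auto
      then have "norm (F y - L2) + norm (F x - L1) < e" by (simp add: dist_norm)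
      then show "norm (integral (cbox x y) f - (L2 - L1)) < e"
        unfolding eq using norm_triangle_ineq4[of "F y - L2" "F x - L1"] by linarith
    qed
  qed
  show ?thesis unfolding has_integral_alt'[of f] using I L by simp
qed

lemma arith2: "2 * (a - (c::real) * b) / 2 - a = - c * b"
  by (simp add: field_simps)

theorem mainTheorem7:
  fixes W :: "real ^ 'n \<Rightarrow> real"
    and gW :: "real ^ 'n \<Rightarrow> real ^ 'n"
    and D2W :: "real ^ 'n \<Rightarrow> ((real ^ 'n) \<Rightarrow>\<^sub>L (real ^ 'n))"
    and U U' U'' :: "real \<Rightarrow> real ^ 'n"
    and am ap :: "real ^ 'n"
    and c :: real
  assumes grad: "\<And>u. GDERIV W u :> gW u"
    and hess: "\<And>u. (gW has_derivative blinfun_apply (D2W u)) (at u)"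
    and hess_cont: "continuous_on UNIV D2W"
    and min_m: "is_local_min W am"
    and min_p: "is_local_min W ap"
    and Wm: "W am < 0" and Wp: "W ap = 0"
    and c_pos: "c > 0"
    and dU: "\<And>x. (U has_vector_derivative U' x) (at x)"
    and dU': "\<And>x. (U' has_vector_derivative U'' x) (at x)"
    and U''_cont: "continuous_on UNIV U''"
    and ode: "\<And>x. U'' x - gW (U x) = - (c *\<^sub>R U' x)"
    and lim_p: "(U \<longlongrightarrow> ap) at_top"
    and lim_m: "(U \<longlongrightarrow> am) at_bot"
    and seq_p: "\<exists>s :: nat \<Rightarrow> real. filterlim s at_top sequentially \<and> (\<lambda>k. U' (s k)) \<longlonglongrightarrow> 0"
    and seq_m: "\<exists>s :: nat \<Rightarrow> real. filterlim s at_bot sequentially \<and> (\<lambda>k. U' (s k)) \<longlonglongrightarrow> 0"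
  shows "(\<lambda>x. (norm (U' x))\<^sup>2) integrable_on UNIV
       \<and> negpart (W am) = c * integral UNIV (\<lambda>x. (norm (U' x))\<^sup>2)
       \<and> ((\<lambda>x. gW (U x)) has_integral (c *\<^sub>R (ap - am))) UNIV"
proof -
  have U'': "U'' x = gW (U x) - c *\<^sub>R U' x" for x using ode[of x] by (simp add: algebra_simps)
  define E where "E x = (U' x \<bullet> U' x) / 2 - W (U x)" for x
  have dW: "((\<lambda>x. W (U x)) has_real_derivative (gW (U x) \<bullet> U' x)) (at x)" for x
  proof -
    have g: "(W has_derivative (\<lambda>h. h \<bullet> gW (U x))) (at (U x))" using grad[of "U x"] by (simp add: gderiv_def)
    have u: "(U has_derivative (\<lambda>t. t *\<^sub>R U' x)) (at x)" using dU[of x] by (simp add: has_vector_derivative_def)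
    show ?thesis unfolding has_field_derivative_def
      by (rule has_derivative_eq_rhs[OF has_derivative_compose[OF u g]]) (auto simp: inner_commute mult.commute)
  qed
  have dN: "((\<lambda>x. U' x \<bullet> U' x) has_real_derivative 2 * (U' x \<bullet> U'' x)) (at x)" for x
  proof -
    have u: "(U' has_derivative (\<lambda>t. t *\<^sub>R U'' x)) (at x)" using dU'[of x] by (simp add: has_vector_derivative_def)
    show ?thesis unfolding has_field_derivative_def
      by (rule has_derivative_eq_rhs[OF has_derivative_inner[OF u u]]) (auto simp: inner_commute algebra_simps fun_eq_iff)
  qed
  have dE: "(E has_real_derivative (- c * (U' x \<bullet> U' x))) (at x)" for x
  proof -
    have d0: "(E has_real_derivative (2 * (U' x \<bullet> U'' x) / 2 - gW (U x) \<bullet> U' x)) (at x)"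
      unfolding E_def[abs_def] by (intro DERIV_diff DERIV_cdivide dN dW)
    have h1: "U' x \<bullet> U'' x = U' x \<bullet> gW (U x) - c * (U' x \<bullet> U' x)"
      unfolding U''[of x] inner_diff_right inner_scaleR_right ..
    have h2: "gW (U x) \<bullet> U' x = U' x \<bullet> gW (U x)" by (rule inner_commute)
    have eq: "2 * (U' x \<bullet> U'' x) / 2 - gW (U x) \<bullet> U' x = - c * (U' x \<bullet> U' x)"
      unfolding h1 h2 by (rule arith2)
    show ?thesis using d0 unfolding eq .
  qed
  have mono: "E y \<le> E x" if "x \<le> y" for x y
  proof (rule DERIV_nonpos_imp_nonincreasing[OF that])
    fix z :: real
    have "- c * (U' z \<bullet> U' z) \<le> 0"
      using mult_nonneg_nonneg[of c "U' z \<bullet> U' z"] c_pos by simp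
    then show "\<exists>y. DERIV E z :> y \<and> y \<le> 0" using dE[of z] by blast
  qed
  have Wc: "isCont W u" for u using grad[of u] unfolding gderiv_def
    by (rule has_derivative_continuous)
  obtain s where s: "filterlim s at_top sequentially" "(\<lambda>k. U' (s k)) \<longlonglongrightarrow> 0" using seq_p by blast
  have Es: "(\<lambda>k. E (s k)) \<longlonglongrightarrow> 0"
  proof -
    have "(\<lambda>k. U (s k)) \<longlonglongrightarrow> ap" using filterlim_compose[OF lim_p s(1)] by (simp add: o_def)
    then have "(\<lambda>k. W (U (s k))) \<longlonglongrightarrow> W ap" using Wc isCont_tendsto_compose by blast
    moreover have "(\<lambda>k. U' (s k) \<bullet> U' (s k)) \<longlonglongrightarrow> 0" using tendsto_inner[OF s(2) s(2)] by simp
    ultimately have "(\<lambda>k. E (s k)) \<longlonglongrightarrow> 0 / 2 - W ap" unfolding E_def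
      by (intro tendsto_intros) auto
    then show ?thesis using Wp by simp
  qed
  have Etop: "(E \<longlongrightarrow> 0) at_top"
  proof (rule order_tendstoI)
    fix a :: real assume a: "a < 0"
    have "E x \<ge> 0" for x
    proof -
      have "\<forall>\<^sub>F k in sequentially. s k \<ge> x" using s(1) by (simp add: filterlim_at_top)
      then have "\<forall>\<^sub>F k in sequentially. E (s k) \<le> E x" by eventually_elim (rule mono)
      then show ?thesis using tendsto_upperbound[OF Es] by simp
    qed
    then show "\<forall>\<^sub>F x in at_top. a < E x" using a by (auto intro: always_eventually less_le_trans)
  next
    fix a :: real assume a: "0 < a"
    have "\<forall>\<^sub>F k in sequentially. E (s k) < a" using Es a by (rule order_tendstoD)
    then obtain N where "\<And>n. n \<ge> N \<Longrightarrow> E (s n) < a" by (auto simp: eventually_sequentially)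
    then have "E (s N) < a" by simp
    then show "\<forall>\<^sub>F x in at_top. E x < a"
      unfolding eventually_at_top_linorder by (intro exI[of _ "s N"]) (auto dest: mono)
  qed
  obtain t where t: "filterlim t at_bot sequentially" "(\<lambda>k. U' (t k)) \<longlonglongrightarrow> 0" using seq_m by blast
  have Et: "(\<lambda>k. E (t k)) \<longlonglongrightarrow> - W am"
  proof -
    have "(\<lambda>k. U (t k)) \<longlonglongrightarrow> am" using filterlim_compose[OF lim_m t(1)] by (simp add: o_def)
    then have "(\<lambda>k. W (U (t k))) \<longlonglongrightarrow> W am" using Wc isCont_tendsto_compose by blast
    moreover have "(\<lambda>k. U' (t k) \<bullet> U' (t k)) \<longlonglongrightarrow> 0" using tendsto_inner[OF t(2) t(2)] by simp
    ultimately have "(\<lambda>k. E (t k)) \<longlonglongrightarrow> 0 / 2 - W am" unfolding E_def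
      by (intro tendsto_intros) auto
    then show ?thesis by simp
  qed
  have Ebot: "(E \<longlongrightarrow> - W am) at_bot"
  proof (rule order_tendstoI)
    fix a :: real assume a: "a > - W am"
    have "E x \<le> - W am" for x
    proof -
      have "\<forall>\<^sub>F k in sequentially. t k \<le> x" using t(1) by (simp add: filterlim_at_bot)
      then have "\<forall>\<^sub>F k in sequentially. E x \<le> E (t k)" by eventually_elim (rule mono)
      then show ?thesis using tendsto_lowerbound[OF Et] by simp
    qed
    then show "\<forall>\<^sub>F x in at_bot. E x < a" using a by (auto intro: always_eventually le_less_trans)
  next
    fix a :: real assume a: "a < - W am"
    have "\<forall>\<^sub>F k in sequentially. a < E (t k)" using Et a by (rule order_tendstoD)
    then obtain N where "\<And>n. n \<ge> N \<Longrightarrow> a < E (t n)" by (auto simp: eventually_sequentially)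
    then have "a < E (t N)" by simp
    then show "\<forall>\<^sub>F x in at_bot. a < E x"
      unfolding eventually_at_bot_linorder by (intro exI[of _ "t N"]) (auto dest: mono)
  qed
  have U'inner: "U' x \<bullet> U' x = 2 * (E x + W (U x))" for x unfolding E_def by simp
  have U'top: "(U' \<longlongrightarrow> 0) at_top"
  proof -
    have "((\<lambda>x. W (U x)) \<longlongrightarrow> W ap) at_top" using Wc lim_p isCont_tendsto_compose by blast
    then have "((\<lambda>x. 2 * (E x + W (U x))) \<longlongrightarrow> 2 * (0 + W ap)) at_top" using Etop by (intro tendsto_intros)
    then have "((\<lambda>x. sqrt (U' x \<bullet> U' x)) \<longlongrightarrow> sqrt 0) at_top" using Wp unfolding U'inner
      by (intro tendsto_real_sqrt) simp
    then have "((\<lambda>x. norm (U' x)) \<longlongrightarrow> 0) at_top" by (simp add: norm_eq_sqrt_inner)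
    then show ?thesis by (rule tendsto_norm_zero_cancel)
  qed
  have U'bot: "(U' \<longlongrightarrow> 0) at_bot"
  proof -
    have "((\<lambda>x. W (U x)) \<longlongrightarrow> W am) at_bot" using Wc lim_m isCont_tendsto_compose by blast
    then have "((\<lambda>x. 2 * (E x + W (U x))) \<longlongrightarrow> 2 * (- W am + W am)) at_bot" using Ebot by (intro tendsto_intros)
    then have "((\<lambda>x. sqrt (U' x \<bullet> U' x)) \<longlongrightarrow> sqrt 0) at_bot" unfolding U'inner
      by (intro tendsto_real_sqrt) simp
    then have "((\<lambda>x. norm (U' x)) \<longlongrightarrow> 0) at_bot" by (simp add: norm_eq_sqrt_inner)
    then show ?thesis by (rule tendsto_norm_zero_cancel)
  qed
  have I1: "((\<lambda>x. (norm (U' x))\<^sup>2) has_integral (0 - (- (- W am) / c))) UNIV"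
  proof (rule improper_ftc)
    fix x
    have "((\<lambda>x. - E x / c) has_real_derivative (- (- c * (U' x \<bullet> U' x)) / c)) (at x)"
      by (intro DERIV_cdivide DERIV_minus dE)
    then show "((\<lambda>x. - E x / c) has_vector_derivative (norm (U' x))\<^sup>2) (at x)"
      using c_pos by (simp add: has_real_derivative_iff_has_vector_derivative[symmetric] power2_norm_eq_inner)
  next
    show "((\<lambda>x. - E x / c) \<longlongrightarrow> 0) at_top" using tendsto_divide[OF tendsto_minus[OF Etop] tendsto_const[of c]] c_pos by simp
    show "((\<lambda>x. - E x / c) \<longlongrightarrow> - (- W am) / c) at_bot" by (intro tendsto_intros Ebot) (use c_pos in simp)
  qed
  have I2: "((\<lambda>x. gW (U x)) has_integral ((0 + c *\<^sub>R ap) - (0 + c *\<^sub>R am))) UNIV"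
  proof (rule improper_ftc)
    fix x
    show "((\<lambda>x. U' x + c *\<^sub>R U x) has_vector_derivative gW (U x)) (at x)"
      using has_vector_derivative_add[OF dU'[of x] has_vector_derivative_scaleR[OF DERIV_const[of c] dU[of x]]]
      by (simp add: U'')
  next
    show "((\<lambda>x. U' x + c *\<^sub>R U x) \<longlongrightarrow> 0 + c *\<^sub>R ap) at_top" by (intro tendsto_intros U'top lim_p)
    show "((\<lambda>x. U' x + c *\<^sub>R U x) \<longlongrightarrow> 0 + c *\<^sub>R am) at_bot" by (intro tendsto_intros U'bot lim_m)
  qed
  show ?thesis
  proof (intro conjI)
    show "(\<lambda>x. (norm (U' x))\<^sup>2) integrable_on UNIV" using I1 by blast
    show "negpart (W am) = c * integral UNIV (\<lambda>x. (norm (U' x))\<^sup>2)"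
      using integral_unique[OF I1] Wm c_pos by (simp add: negpart_def)
    show "((\<lambda>x. gW (U x)) has_integral c *\<^sub>R (ap - am)) UNIV"
      using I2 by (simp add: scaleR_diff_right)
  qed
qed

end
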